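(* Let $M'=M[D,K]$ be a compatible minor of the weighted uncertainty matroid $\mathcal{M}$. If there is a circuit $C$ of $M'$ containing an element $e$ that has the unique maximum weight in $C$, then $M[D\cup\{e\},K]$ is a compatible minor of $\mathcal{M}$.
   Context: A weighted uncertainty matroid $\mathcal{M}=(E,\mathcal{I},A,w)$ consists of a matroid $M=(E,\mathcal{I})$ on a finite set $E$, for each $e\in E$ a non-empty finite union $A_e$ of bounded real intervals (each open or closed), a weight $w_e\in A_e$, and a query cost $c_e\ge0$. A minimum-weight basis (MWB) is a basis minimizing total weight. A weight assignment is $w^*$ with $w^*_e\in A_e$, consistent with $Q$ if $w^*_e=w_e$ on $Q$. $Q$ verifies an MWB $B$ if for every weight assignment consistent with $Q$, $B$ is an MWB with respect to it; a certificate for $\mathcal{M}$ is a set verifying some MWB, and $c^*$ denotes the minimum cost $\sum_{e\in Q}c_e$ of a certificate for $\mathcal{M}$. For $D,K\subseteq E$, $M[D,K]$ is the matroid obtained from $M$ by deleting $D$ and contracting $K$, with weights restricted to its ground set $E(M[D,K])=E\setminus(D\cup K)$. $M[D,K]$ is a compatible minor of $\mathcal{M}$ if there is a set $Q$ of cost $c^*$ that verifies an MWB $B$ of $\mathcal{M}$ with $K\subseteq B$ and $D\cap B=\emptyset$. *)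

theory Defs
  imports Complex_Main
begin

definition matroid :: "'a set \<Rightarrow> ('a set \<Rightarrow> bool) \<Rightarrow> bool" where
  "matroid E indep \<longleftrightarrow>
     finite E \<and>
     (\<forall>I. indep I \<longrightarrow> I \<subseteq> E) \<and>
     indep {} \<and>
     (\<forall>I J. indep J \<and> I \<subseteq> J \<longrightarrow> indep I) \<and>
     (\<forall>I J. indep I \<and> indep J \<and> card I < card J \<longrightarrow>
        (\<exists>x\<in>J - I. indep (insert x I)))"

definition basis :: "'a set \<Rightarrow> ('a set \<Rightarrow> bool) \<Rightarrow> 'a set \<Rightarrow> bool" where
  "basis E indep B \<longleftrightarrow> B \<subseteq> E \<and> indep B \<and>
     (\<forall>X. B \<subset> X \<and> X \<subseteq> E \<longrightarrow> \<not> indep X)"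

definition circuit :: "'a set \<Rightarrow> ('a set \<Rightarrow> bool) \<Rightarrow> 'a set \<Rightarrow> bool" where
  "circuit E indep C \<longleftrightarrow> C \<subseteq> E \<and> \<not> indep C \<and> (\<forall>X. X \<subset> C \<longrightarrow> indep X)"

text \<open>Minor M[D,K]: delete D, then contract K.\<close>
definition minor_ground :: "'a set \<Rightarrow> 'a set \<Rightarrow> 'a set \<Rightarrow> 'a set" where
  "minor_ground E D K = E - (D \<union> K)"

definition minor_indep ::
  "'a set \<Rightarrow> ('a set \<Rightarrow> bool) \<Rightarrow> 'a set \<Rightarrow> 'a set \<Rightarrow> 'a set \<Rightarrow> bool" where
  "minor_indep E indep D K I \<longleftrightarrow> I \<subseteq> E - (D \<union> K) \<and>
     (\<exists>J. basis ((K \<inter> E) - D) indep J \<and> indep (I \<union> J))"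

definition uncertainty_area :: "real set \<Rightarrow> bool" where
  "uncertainty_area S \<longleftrightarrow> S \<noteq> {} \<and>
     (\<exists>F. finite F \<and> S = \<Union>F \<and> (\<forall>J\<in>F. \<exists>a b. J = {a..b} \<or> J = {a<..<b}))"

definition uncertainty_matroid ::
  "'a set \<Rightarrow> ('a set \<Rightarrow> bool) \<Rightarrow> ('a \<Rightarrow> real set) \<Rightarrow> ('a \<Rightarrow> real) \<Rightarrow> ('a \<Rightarrow> real) \<Rightarrow> bool" where
  "uncertainty_matroid E indep A w c \<longleftrightarrow> matroid E indep \<and>
     (\<forall>e\<in>E. uncertainty_area (A e) \<and> w e \<in> A e \<and> c e \<ge> 0)"

definition mwb :: "'a set \<Rightarrow> ('a set \<Rightarrow> bool) \<Rightarrow> ('a \<Rightarrow> real) \<Rightarrow> 'a set \<Rightarrow> bool" where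
  "mwb E indep w B \<longleftrightarrow> basis E indep B \<and>
     (\<forall>B'. basis E indep B' \<longrightarrow> sum w B \<le> sum w B')"

definition weight_assignment :: "'a set \<Rightarrow> ('a \<Rightarrow> real set) \<Rightarrow> ('a \<Rightarrow> real) \<Rightarrow> bool" where
  "weight_assignment E A w' \<longleftrightarrow> (\<forall>e\<in>E. w' e \<in> A e)"

definition consistent :: "'a set \<Rightarrow> ('a \<Rightarrow> real) \<Rightarrow> ('a \<Rightarrow> real) \<Rightarrow> bool" where
  "consistent Q w w' \<longleftrightarrow> (\<forall>e\<in>Q. w' e = w e)"

definition verifies ::
  "'a set \<Rightarrow> ('a set \<Rightarrow> bool) \<Rightarrow> ('a \<Rightarrow> real set) \<Rightarrow> ('a \<Rightarrow> real) \<Rightarrow> 'a set \<Rightarrow> 'a set \<Rightarrow> bool" where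
  "verifies E indep A w Q B \<longleftrightarrow>
     (\<forall>w'. weight_assignment E A w' \<and> consistent Q w w' \<longrightarrow> mwb E indep w' B)"

definition certificate ::
  "'a set \<Rightarrow> ('a set \<Rightarrow> bool) \<Rightarrow> ('a \<Rightarrow> real set) \<Rightarrow> ('a \<Rightarrow> real) \<Rightarrow> 'a set \<Rightarrow> bool" where
  "certificate E indep A w Q \<longleftrightarrow> Q \<subseteq> E \<and>
     (\<exists>B. mwb E indep w B \<and> verifies E indep A w Q B)"

definition opt_cost ::
  "'a set \<Rightarrow> ('a set \<Rightarrow> bool) \<Rightarrow> ('a \<Rightarrow> real set) \<Rightarrow> ('a \<Rightarrow> real) \<Rightarrow> ('a \<Rightarrow> real) \<Rightarrow> real" where
  "opt_cost E indep A w c = Min {sum c Q | Q. certificate E indep A w Q}"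

definition compatible_minor ::
  "'a set \<Rightarrow> ('a set \<Rightarrow> bool) \<Rightarrow> ('a \<Rightarrow> real set) \<Rightarrow> ('a \<Rightarrow> real) \<Rightarrow> ('a \<Rightarrow> real)
     \<Rightarrow> 'a set \<Rightarrow> 'a set \<Rightarrow> bool" where
  "compatible_minor E indep A w c D K \<longleftrightarrow>
     (\<exists>Q B. Q \<subseteq> E \<and> sum c Q = opt_cost E indep A w c \<and>
        mwb E indep w B \<and> verifies E indep A w Q B \<and> K \<subseteq> B \<and> D \<inter> B = {})"

end

theory Submission
  imports Defs
begin

lemma aug_ext:
  assumes m: "matroid E indep"
  shows "indep J \<Longrightarrow> indep I \<Longrightarrow> card J - card I = n \<Longrightarrow>
     \<exists>X. I \<subseteq> X \<and> X \<subseteq> I \<union> J \<and> indep X \<and> card J \<le> card X"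
proof (induction n arbitrary: I)
  case 0
  then show ?case by auto
next
  case (Suc n)
  then have lt: "card I < card J" by simp
  have augm: "\<forall>I J. indep I \<and> indep J \<and> card I < card J \<longrightarrow>
        (\<exists>x\<in>J - I. indep (insert x I))" and fE: "finite E" and sE: "\<forall>I. indep I \<longrightarrow> I \<subseteq> E"
    using m unfolding matroid_def by blast+
  from augm Suc.prems lt obtain x where x: "x \<in> J - I" "indep (insert x I)"
    by blast
  have fin: "finite I" using fE sE Suc.prems(2) finite_subset by blast
  then have "card (insert x I) = Suc (card I)" using x by simp
  then have "card J - card (insert x I) = n" using Suc.prems by simp
  from Suc.IH[OF Suc.prems(1) x(2) this] obtain X where
    "insert x I \<subseteq> X" "X \<subseteq> insert x I \<union> J" "indep X" "card J \<le> card X" by blast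
  then show ?case using x by blast
qed

theorem mainTheorem9:
  fixes E :: "'a set" and indep :: "'a set \<Rightarrow> bool" and A :: "'a \<Rightarrow> real set"
    and w c :: "'a \<Rightarrow> real" and D K C :: "'a set" and e :: 'a
  assumes "uncertainty_matroid E indep A w c"
    and "compatible_minor E indep A w c D K"
    and "circuit (minor_ground E D K) (minor_indep E indep D K) C"
    and "e \<in> C"
    and "\<forall>f\<in>C - {e}. w f < w e"
  shows "compatible_minor E indep A w c (D \<union> {e}) K"
proof -
  have m: "matroid E indep" using assms(1) unfolding uncertainty_matroid_def by blast
  have finE: "finite E" and sub: "\<And>I. indep I \<Longrightarrow> I \<subseteq> E"
    and down: "\<And>I J. indep J \<Longrightarrow> I \<subseteq> J \<Longrightarrow> indep I"
    and aug: "\<And>I J. indep I \<Longrightarrow> indep J \<Longrightarrow> card I < card J \<Longrightarrow> \<exists>x\<in>J - I. indep (insert x I)"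
    using m unfolding matroid_def by blast+
  obtain Q B where QB: "Q \<subseteq> E" "sum c Q = opt_cost E indep A w c"
     "mwb E indep w B" "verifies E indep A w Q B" "K \<subseteq> B" "D \<inter> B = {}"
    using assms(2) unfolding compatible_minor_def by blast
  have bB: "basis E indep B" using QB(3) unfolding mwb_def by blast
  have BE: "B \<subseteq> E" and iB: "indep B" and maxB: "\<And>X. B \<subset> X \<Longrightarrow> X \<subseteq> E \<Longrightarrow> \<not> indep X"
    using bB unfolding basis_def by blast+
  have finB: "finite B" using BE finE finite_subset by blast
  have KE: "(K \<inter> E) - D = K" using QB(5,6) BE by blast
  have iK: "indep K" using down[OF iB QB(5)] .
  have bK: "\<And>J. basis K indep J \<longleftrightarrow> J = K"
  proof
    fix J assume "basis K indep J"
    then show "J = K" using iK unfolding basis_def by blast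
  next
    fix J assume "J = K" then show "basis K indep J" using iK unfolding basis_def by blast
  qed
  have Cg: "C \<subseteq> E - (D \<union> K)" and nC: "\<not> minor_indep E indep D K C"
    and pC: "\<And>X. X \<subset> C \<Longrightarrow> minor_indep E indep D K X"
    using assms(3) unfolding circuit_def minor_ground_def by blast+
  have "minor_indep E indep D K (C - {e})" using pC assms(4) by blast
  then have i1: "indep ((C - {e}) \<union> K)" unfolding minor_indep_def KE bK by blast
  have n1: "\<not> indep (C \<union> K)" using nC Cg unfolding minor_indep_def KE bK by blast
  have "e \<notin> B"
  proof
    assume eB: "e \<in> B"
    obtain X where X: "(C - {e}) \<union> K \<subseteq> X" "X \<subseteq> (C - {e}) \<union> K \<union> B" "indep X" "card B \<le> card X"
      using aug_ext[OF m iB i1 refl] by blast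
    have eX: "e \<notin> X"
    proof
      assume "e \<in> X"
      then have "C \<union> K \<subseteq> X" using X(1) by blast
      then show False using down[OF X(3)] n1 by blast
    qed
    have "card (B - {e}) < card B" using finB eB by (meson card_Diff1_less)
    then have cX: "card (B - {e}) < card X" using X(4) by simp
    have iBe: "indep (B - {e})" using down[OF iB, of "B - {e}"] by simp
    then obtain x where x: "x \<in> X - (B - {e})" "indep (insert x (B - {e}))"
      using aug[OF iBe X(3) cX] by blast
    have xne: "x \<noteq> e" using x eX by blast
    have xC: "x \<in> C - {e}" and xB: "x \<notin> B" using x X(2) QB(5) xne by blast+
    define B' where "B' = insert x (B - {e})"
    have cB': "card B' = card B" unfolding B'_def using xB finB eB
      by (simp add: card_insert_if) (metis card_0_eq empty_iff Suc_pred neq0_conv)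
    have bB': "basis E indep B'"
      unfolding basis_def
    proof (intro conjI allI impI)
      show "B' \<subseteq> E" using sub x(2) B'_def by blast
      show "indep B'" using x(2) B'_def by simp
      fix Y assume Y: "B' \<subset> Y \<and> Y \<subseteq> E"
      show "\<not> indep Y"
      proof
        assume iY: "indep Y"
        have "finite Y" using Y finE finite_subset by blast
        then have "card B' < card Y" using Y psubset_card_mono by blast
        then obtain z where z: "z \<in> Y - B" "indep (insert z B)"
          using aug[OF iB iY] cB' by auto
        have "B \<subset> insert z B" "insert z B \<subseteq> E" using z Y BE by blast+
        then show False using maxB z(2) by blast
      qed
    qed
    have "sum w B \<le> sum w B'" using QB(3) bB' unfolding mwb_def by blast
    moreover have "sum w B' = w x + (sum w B - w e)"
      unfolding B'_def using finB eB xB by (simp add: sum_diff1)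
    moreover have "w x < w e" using assms(5) xC by blast
    ultimately show False by simp
  qed
  then show ?thesis unfolding compatible_minor_def using QB by blast
qed

end
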